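(* Let $\lambda>0$ and $0<\nu<2$. Let $u_\nu$ be the solution of $\frac{\partial^{\nu}u}{\partial t^{\nu}}=\lambda^2\frac{\partial^2u}{\partial x^2}$, $x\in\mathbb{R}$, $t>0$, with $u(x,0)=\delta(x)$ if $0<\nu\le1$ and $u(x,0)=\delta(x)$, $u_t(x,0)=0$ if $1<\nu<2$. Then \begin{align*} u_\nu(x,t)&=\frac{1}{2\pi\lambda t^{\nu/2}}\int_0^{+\infty}e^{-w}w^{\nu/2-1}e^{-\frac{|x|w^{\nu/2}}{\lambda t^{\nu/2}}\cos\frac{\nu\pi}{2}}\sin\!\left(\frac{\nu\pi}{2}-\frac{|x|w^{\nu/2}}{\lambda t^{\nu/2}}\sin\frac{\nu\pi}{2}\right)dw\\ &=\frac{1}{\nu\pi}\int_0^{+\infty}e^{-|x|y\cos\frac{\nu\pi}{2}-(\lambda y)^{2/\nu}t}\sin\!\left(\frac{\nu\pi}{2}-|x|y\sin\frac{\nu\pi}{2}\right)dy. \end{align*}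
   Context: Fractional derivatives are in the Dzherbashyan–Caputo sense: for $m-1<\nu<m$, $\frac{\partial^{\nu}u}{\partial t^{\nu}}(x,t)=\frac{1}{\Gamma(m-\nu)}\int_0^t (t-s)^{m-\nu-1}\frac{\partial^m u}{\partial s^m}(x,s)\,ds$; for $\nu=m$ the ordinary derivative. The solution is $u_\nu(x,t)=\frac{1}{2\lambda t^{\nu/2}}\sum_{k\ge0}\frac{(-|x|/(\lambda t^{\nu/2}))^k}{k!\,\Gamma(-\nu k/2+1-\nu/2)}$. *)

theory Defs
  imports "HOL-Analysis.Analysis"
begin

text \<open>The fundamental solution u_nu(x,t) of the time-fractional diffusion equation,
  given by the series from the paper. The reciprocal Gamma function rGamma
  (entire, zero at the poles of Gamma) is used for 1/Gamma.\<close>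
definition u_nu :: "real \<Rightarrow> real \<Rightarrow> real \<Rightarrow> real \<Rightarrow> real" where
  "u_nu lam \<nu> x t =
     1 / (2 * lam * t powr (\<nu>/2)) *
     (\<Sum>k. (- \<bar>x\<bar> / (lam * t powr (\<nu>/2))) ^ k / fact k
              * rGamma (- \<nu> * real k / 2 + 1 - \<nu>/2))"

end

theory Submission
  imports Defs
begin

lemma gamma_lborel:
  fixes s :: real assumes s: "s > 0"
  shows "set_integrable lborel {0<..} (\<lambda>w. exp (- w) * w powr (s - 1))"
    and "(LBINT w:{0<..}. exp (- w) * w powr (s - 1)) = Gamma s"
proof -
  have eq: "(\<lambda>t. indicator {0..} t * t powr (s - 1) / exp t) = (\<lambda>w. indicator {0<..} w * (exp (- w) * w powr (s - 1)))"
    by (rule ext) (auto simp: indicator_def exp_minus field_simps)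
  have nn: "(\<integral>\<^sup>+t. ennreal (indicator {0..} t * t powr (s - 1) / exp t) \<partial>lborel) = ennreal (Gamma s)"
    using Gamma_conv_nn_integral_real[OF s] by simp
  have int: "integrable lborel (\<lambda>t. indicator {0..} t * t powr (s - 1) / exp t)"
    by (rule integrableI_nonneg) (use nn in \<open>auto simp: indicator_def\<close>)
  have "(\<integral>t. indicator {0..} t * t powr (s - 1) / exp t \<partial>lborel) = enn2real (\<integral>\<^sup>+t. ennreal (indicator {0..} t * t powr (s - 1) / exp t) \<partial>lborel)"
    by (rule integral_eq_nn_integral) (auto simp: indicator_def)
  also have "\<dots> = Gamma s" using nn Gamma_real_pos[OF s] by simp
  finally have "(\<integral>t. indicator {0..} t * t powr (s - 1) / exp t \<partial>lborel) = Gamma s" .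
  then show "(LBINT w:{0<..}. exp (- w) * w powr (s - 1)) = Gamma s"
    using eq by (simp add: set_lebesgue_integral_def)
  show "set_integrable lborel {0<..} (\<lambda>w. exp (- w) * w powr (s - 1))"
    using int eq by (simp add: set_integrable_def)
qed

lemma gamma_scaled_integrable:
  fixes s b :: real assumes s: "s > 0" and b: "b > 0"
  shows "set_integrable lborel {0<..} (\<lambda>w. exp (- (b * w)) * w powr (s - 1))"
proof -
  have "integrable lborel (\<lambda>w. indicator {0<..} w * (exp (- w) * w powr (s - 1)))"
    using gamma_lborel(1)[OF s] by (simp add: set_integrable_def)
  from lborel_integrable_real_affine[OF this, of b 0] b
  have "integrable lborel (\<lambda>x. indicator {0<..} (b * x) * (exp (- (b * x)) * (b * x) powr (s - 1)))"
    by simp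
  hence "integrable lborel (\<lambda>x. b powr (1 - s) * (indicator {0<..} (b * x) * (exp (- (b * x)) * (b * x) powr (s - 1))))"
    by (rule integrable_mult_right)
  moreover have "\<And>x. b powr (1 - s) * (indicator {0<..} (b * x) * (exp (- (b * x)) * (b * x) powr (s - 1)))
      = indicator {0<..} x * (exp (- (b * x)) * x powr (s - 1))"
  proof -
    fix x :: real
    show "b powr (1 - s) * (indicator {0<..} (b * x) * (exp (- (b * x)) * (b * x) powr (s - 1)))
      = indicator {0<..} x * (exp (- (b * x)) * x powr (s - 1))"
    proof (cases "x > 0")
      case True
      have "b powr (1 - s) * (b * x) powr (s - 1) = x powr (s - 1)"
        using True b by (simp add: powr_mult powr_add[symmetric])
      then show ?thesis using True b by (simp add: indicator_def algebra_simps)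
    next
      case False
      then show ?thesis using b by (simp add: indicator_def zero_less_mult_iff)
    qed
  qed
  ultimately show ?thesis by (simp add: set_integrable_def)
qed

lemma rGamma_refl_real:
  fixes s :: real assumes "s > 0"
  shows "rGamma (1 - s) = Gamma s * sin (pi * s) / pi"
proof -
  have "complex_of_real (rGamma s * rGamma (1 - s)) = complex_of_real (sin (pi * s) / pi)"
    using rGamma_reflection_complex[of "complex_of_real s"]
    by (simp add: rGamma_complex_of_real[symmetric] sin_of_real[symmetric])
  hence e: "rGamma s * rGamma (1 - s) = sin (pi * s) / pi" by (simp only: of_real_eq_iff)
  have "rGamma s \<noteq> 0" using Gamma_real_pos[OF assms] by (auto simp: Gamma_def)
  hence "Gamma s * rGamma s = 1" by (simp add: Gamma_def)
  hence "rGamma (1 - s) = Gamma s * (rGamma s * rGamma (1 - s))" by (simp add: algebra_simps)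
  then show ?thesis using e by simp
qed

lemma series_ident:
  fixes r \<theta> :: real
  shows "(\<lambda>k. (- r) ^ k / fact k * sin (\<theta> * (real k + 1))) sums (exp (- r * cos \<theta>) * sin (\<theta> - r * sin \<theta>))"
proof -
  have "(\<lambda>n. cis \<theta> * ((- (complex_of_real r * cis \<theta>)) ^ n /\<^sub>R fact n)) sums (cis \<theta> * exp (- (complex_of_real r * cis \<theta>)))"
    by (rule sums_mult[OF exp_converges])
  from sums_Im[OF this]
  have *: "(\<lambda>n. Im (cis \<theta> * ((- (complex_of_real r * cis \<theta>)) ^ n /\<^sub>R fact n))) sums Im (cis \<theta> * exp (- (complex_of_real r * cis \<theta>)))" .
  have a: "Im (cis \<theta> * ((- (complex_of_real r * cis \<theta>)) ^ n /\<^sub>R fact n)) = (- r) ^ n / fact n * sin (\<theta> * (real n + 1))" for n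
  proof -
    have c: "cis (\<theta> * (real n + 1)) = cis \<theta> * cis (real n * \<theta>)" by (simp add: cis_mult algebra_simps)
    have "cis \<theta> * ((- (complex_of_real r * cis \<theta>)) ^ n /\<^sub>R fact n) = complex_of_real ((- r) ^ n / fact n) * cis (\<theta> * (real n + 1))"
      unfolding c by (simp add: power_mult_distrib Complex.DeMoivre scaleR_conv_of_real power_minus' field_simps)
    moreover have "\<And>q \<phi>. Im (complex_of_real q * cis \<phi>) = q * sin \<phi>" by simp
    ultimately show ?thesis by metis
  qed
  have b: "Im (cis \<theta> * exp (- (complex_of_real r * cis \<theta>))) = exp (- r * cos \<theta>) * sin (\<theta> - r * sin \<theta>)"
  proof -
    have "cis \<theta> * exp (- (complex_of_real r * cis \<theta>)) = exp (Complex (- r * cos \<theta>) (\<theta> - r * sin \<theta>))"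
    proof -
      have "cis \<theta> * exp (- (complex_of_real r * cis \<theta>)) = exp (\<i> * complex_of_real \<theta> + (- (complex_of_real r * cis \<theta>)))"
        by (subst exp_add) (simp add: cis_conv_exp)
      also have "\<i> * complex_of_real \<theta> + (- (complex_of_real r * cis \<theta>)) = Complex (- r * cos \<theta>) (\<theta> - r * sin \<theta>)"
        by (simp add: complex_eq_iff)
      finally show ?thesis .
    qed
    then show ?thesis by (simp add: Im_exp)
  qed
  show ?thesis using * unfolding a b .
qed

lemma exp_partial_le:
  fixes y :: real assumes "y \<ge> 0"
  shows "(\<Sum>k<n. y ^ k / fact k) \<le> exp y"
proof -
  have s: "(\<lambda>k. y ^ k / fact k) sums exp y" using exp_converges[of y] by (simp add: divide_inverse mult.commute)
  have "(\<Sum>k<n. y ^ k / fact k) \<le> suminf (\<lambda>k. y ^ k / fact k)"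
    by (rule sum_le_suminf) (use s assms in \<open>auto simp: sums_iff\<close>)
  then show ?thesis using s by (simp add: sums_iff)
qed

lemma powr_half_bound:
  fixes a z :: real assumes a: "0 < a" "a < 1" and z: "z \<ge> 0"
  obtains C where "\<And>w. w > 0 \<Longrightarrow> z * w powr a \<le> w / 2 + C"
proof -
  define M where "M = (2 * z + 1) powr (1 / (1 - a))"
  have M: "M > 0" using z by (simp add: M_def)
  have "z * w powr a \<le> w / 2 + z * M powr a" if w: "w > 0" for w
  proof (cases "w \<le> M")
    case True
    have "w powr a \<le> M powr a" using True w a by (intro powr_mono2) auto
    then have "z * w powr a \<le> z * M powr a" using z by (intro mult_left_mono)
    then show ?thesis using w by simp
  next
    case False
    have "M powr (1 - a) = 2 * z + 1" using a z by (simp add: M_def powr_powr)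
    moreover have "M powr (1 - a) \<le> w powr (1 - a)" using False M a by (intro powr_mono2) auto
    ultimately have h: "2 * z + 1 \<le> w powr (1 - a)" by simp
    have ww: "w = w powr a * w powr (1 - a)" using w by (simp add: powr_add[symmetric])
    have "z * w powr a \<le> w powr a * (2 * z + 1) / 2" using w by (simp add: algebra_simps)
    also have "\<dots> \<le> w powr a * w powr (1 - a) / 2" using h w by (intro divide_right_mono mult_left_mono) auto
    also have "\<dots> = w / 2" using ww by simp
    moreover have "z * M powr a \<ge> 0" using z by simp
    ultimately show ?thesis by linarith
  qed
  then show ?thesis using that by blast
qed

lemma G_integrable:
  fixes a z :: real assumes a: "0 < a" "a < 1" and z: "z \<ge> 0"
  shows "set_integrable lborel {0<..} (\<lambda>w. exp (- w) * w powr (a - 1) * exp (z * w powr a))"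
proof -
  obtain C where C: "\<And>w. w > 0 \<Longrightarrow> z * w powr a \<le> w / 2 + C" using powr_half_bound[OF a z] by blast
  have "set_integrable lborel {0<..} (\<lambda>w. exp C * (exp (- ((1/2) * w)) * w powr (a - 1)))"
    using gamma_scaled_integrable[of a "1/2"] a by simp
  then show ?thesis
  proof (rule set_integrable_bound)
    show "set_borel_measurable lborel {0<..} (\<lambda>w. exp (- w) * w powr (a - 1) * exp (z * w powr a))"
      unfolding set_borel_measurable_def by measurable
    show "AE w in lborel. w \<in> {0<..} \<longrightarrow> norm (exp (- w) * w powr (a - 1) * exp (z * w powr a)) \<le> norm (exp C * (exp (- ((1/2) * w)) * w powr (a - 1)))"
    proof (intro AE_I2 impI)
      fix w :: real assume "w \<in> {0<..}"
      hence w: "w > 0" by simp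
      have "exp (- w) * exp (z * w powr a) \<le> exp (- w) * exp (w / 2 + C)"
        using C[OF w] by simp
      also have "\<dots> = exp C * exp (- ((1/2) * w))" by (simp add: exp_add[symmetric])
      finally have "exp (- w) * exp (z * w powr a) * w powr (a - 1) \<le> exp C * exp (- ((1/2) * w)) * w powr (a - 1)"
        by (intro mult_right_mono) auto
      then show "norm (exp (- w) * w powr (a - 1) * exp (z * w powr a)) \<le> norm (exp C * (exp (- ((1/2) * w)) * w powr (a - 1)))"
        by (simp add: algebra_simps)
    qed
  qed
qed

lemma main_w:
  fixes a z \<theta> :: real
  assumes a: "0 < a" "a < 1" and z: "z \<ge> 0" and th: "\<theta> = pi * a"
  defines "F \<equiv> (\<lambda>w. exp (- w) * w powr (a - 1) * exp (- (z * w powr a) * cos \<theta>) * sin (\<theta> - z * w powr a * sin \<theta>))"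
  shows "set_integrable lborel {0<..} F"
    and "(\<lambda>k. (- z) ^ k / fact k * rGamma (1 - a * (real k + 1))) sums ((LBINT w:{0<..}. F w) / pi)"
proof -
  define f where "f k w = exp (- w) * w powr (a - 1) * ((- (z * w powr a)) ^ k / fact k * sin (\<theta> * (real k + 1)))" for k w
  define G where "G w = indicator {0<..} w * (exp (- w) * w powr (a - 1) * exp (z * w powr a))" for w :: real
  define S where "S n w = indicator {0<..} w * (\<Sum>k<n. f k w)" for n w
  define coef where "coef k = (- z) ^ k / fact k * sin (\<theta> * (real k + 1))" for k
  have fsums: "(\<lambda>k. f k w) sums F w" if "w > 0" for w
    unfolding f_def F_def
    using sums_mult[OF series_ident[of "z * w powr a" \<theta>], of "exp (- w) * w powr (a - 1)"]
    by (simp add: mult.assoc)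
  have fk: "f k w = coef k * (exp (- w) * w powr (a * (real k + 1) - 1))" if "w > 0" for k w
  proof -
    have "w powr (a - 1) * (w powr a) ^ k = w powr (a * (real k + 1) - 1)"
      using that by (simp add: powr_power powr_add[symmetric] algebra_simps)
    then show ?thesis unfolding f_def coef_def
      by (simp add: power_mult_distrib power_minus' algebra_simps)
  qed
  have fint: "integrable lborel (\<lambda>w. indicator {0<..} w * f k w)"
       and fval: "(\<integral>w. indicator {0<..} w * f k w \<partial>lborel) = pi * ((- z) ^ k / fact k * rGamma (1 - a * (real k + 1)))" for k
  proof -
    have s: "a * (real k + 1) > 0" using a by simp
    have eq: "(\<lambda>w. indicator {0<..} w * f k w) = (\<lambda>w. coef k * (indicator {0<..} w * (exp (- w) * w powr (a * (real k + 1) - 1))))"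
      by (rule ext) (auto simp: indicator_def fk)
    show "integrable lborel (\<lambda>w. indicator {0<..} w * f k w)"
      unfolding eq using gamma_lborel(1)[OF s] by (simp add: set_integrable_def)
    have "(\<integral>w. indicator {0<..} w * f k w \<partial>lborel) = coef k * Gamma (a * (real k + 1))"
      unfolding eq using gamma_lborel(2)[OF s] by (simp add: set_lebesgue_integral_def)
    also have "\<dots> = pi * ((- z) ^ k / fact k * rGamma (1 - a * (real k + 1)))"
      unfolding coef_def rGamma_refl_real[OF s] th by (simp add: algebra_simps)
    finally show "(\<integral>w. indicator {0<..} w * f k w \<partial>lborel) = pi * ((- z) ^ k / fact k * rGamma (1 - a * (real k + 1)))" .
  qed
  have Gint: "integrable lborel G"
    using G_integrable[OF a z] by (simp add: G_def[abs_def] set_integrable_def)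
  have bound: "norm (S n w) \<le> G w" for n w
  proof (cases "w > 0")
    case False then show ?thesis by (simp add: S_def G_def indicator_def)
  next
    case True
    have "\<bar>\<Sum>k<n. f k w\<bar> \<le> (\<Sum>k<n. \<bar>f k w\<bar>)" by (rule sum_abs)
    also have "\<dots> \<le> (\<Sum>k<n. exp (- w) * w powr (a - 1) * ((z * w powr a) ^ k / fact k))"
    proof (rule sum_mono)
      fix k
      have "\<bar>f k w\<bar> = exp (- w) * w powr (a - 1) * ((z * w powr a) ^ k / fact k) * \<bar>sin (\<theta> * (real k + 1))\<bar>"
        unfolding f_def using z by (simp add: abs_mult power_abs)
      also have "\<dots> \<le> exp (- w) * w powr (a - 1) * ((z * w powr a) ^ k / fact k) * 1"
        by (intro mult_left_mono) (use z in auto)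
      finally show "\<bar>f k w\<bar> \<le> exp (- w) * w powr (a - 1) * ((z * w powr a) ^ k / fact k)" by simp
    qed
    also have "\<dots> = exp (- w) * w powr (a - 1) * (\<Sum>k<n. (z * w powr a) ^ k / fact k)"
      by (simp add: sum_distrib_left)
    also have "\<dots> \<le> exp (- w) * w powr (a - 1) * exp (z * w powr a)"
      by (intro mult_left_mono exp_partial_le) (use z in auto)
    finally show ?thesis using True by (simp add: S_def G_def)
  qed
  have lim: "(\<lambda>n. S n w) \<longlonglongrightarrow> indicator {0<..} w * F w" for w
  proof (cases "w > 0")
    case False then show ?thesis by (simp add: S_def indicator_def)
  next
    case True
    then show ?thesis unfolding S_def using fsums[OF True]
      by (intro tendsto_mult tendsto_const) (simp add: sums_def)
  qed
  have Fmeas: "(\<lambda>w. indicator {0<..} w * F w) \<in> borel_measurable lborel"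
    unfolding F_def by measurable
  have Smeas: "S n \<in> borel_measurable lborel" for n
    unfolding S_def f_def by measurable
  have Fi: "integrable lborel (\<lambda>w. indicator {0<..} w * F w)"
    by (rule integrable_dominated_convergence[where s=S, OF Fmeas Smeas Gint]) (use lim bound in auto)
  then show "set_integrable lborel {0<..} F" by (simp add: set_integrable_def)
  have L: "(\<lambda>n. integral\<^sup>L lborel (S n)) \<longlonglongrightarrow> (\<integral>w. indicator {0<..} w * F w \<partial>lborel)"
    by (rule integral_dominated_convergence[where s=S, OF Fmeas Smeas Gint]) (use lim bound in auto)
  have Sval: "integral\<^sup>L lborel (S n) = pi * (\<Sum>k<n. (- z) ^ k / fact k * rGamma (1 - a * (real k + 1)))" for n
  proof -
    have "S n = (\<lambda>w. \<Sum>k<n. indicator {0<..} w * f k w)" by (rule ext) (simp add: S_def sum_distrib_left)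
    then have "integral\<^sup>L lborel (S n) = (\<Sum>k<n. \<integral>w. indicator {0<..} w * f k w \<partial>lborel)"
      by (simp only:) (rule Bochner_Integration.integral_sum[where f="\<lambda>k w. indicator {0<..} w * f k w", OF fint])
    also have "\<dots> = pi * (\<Sum>k<n. (- z) ^ k / fact k * rGamma (1 - a * (real k + 1)))"
      by (simp add: fval sum_distrib_left)
    finally show ?thesis .
  qed
  have "(\<lambda>n. (\<Sum>k<n. (- z) ^ k / fact k * rGamma (1 - a * (real k + 1)))) \<longlonglongrightarrow> (\<integral>w. indicator {0<..} w * F w \<partial>lborel) / pi"
    using tendsto_divide[OF L tendsto_const[of pi]] by (simp add: Sval)
  then show "(\<lambda>k. (- z) ^ k / fact k * rGamma (1 - a * (real k + 1))) sums ((LBINT w:{0<..}. F w) / pi)"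
    by (simp add: sums_def set_lebesgue_integral_def)
qed

lemma real_powr_at_top':
  assumes "(p::real) > 0"
  shows   "filterlim (\<lambda>x. x powr p) at_top at_top"
proof (subst filterlim_cong[OF refl refl])
  show "LIM x at_top. exp (p * ln x) :> at_top"
    by (rule filterlim_compose[OF exp_at_top filterlim_tendsto_pos_mult_at_top[OF tendsto_const]])
       (simp_all add: ln_at_top assms)
  show "eventually (\<lambda>x. x powr p = exp (p * ln x)) at_top"
    using eventually_gt_at_top[of 0] by eventually_elim (simp add: powr_def)
qed

lemma limA: "0 < a \<Longrightarrow> 0 < (c::real) \<Longrightarrow> ((ereal \<circ> (\<lambda>w::real. w powr a / c) \<circ> real_of_ereal) \<longlongrightarrow> 0) (at_right 0)"
  unfolding zero_ereal_def ereal_tendsto_simps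
proof -
  assume a: "0 < a" and c: "0 < c"
  have "((\<lambda>w::real. w powr a) \<longlongrightarrow> 0) (at_right 0)"
    by (rule tendsto_zero_powrI) (use a eventually_at_right_less[of "0::real"] in \<open>auto intro: tendsto_ident_at eventually_mono\<close>)
  then show "((\<lambda>w::real. w powr a / c) \<longlongrightarrow> 0) (at_right 0)"
    using tendsto_divide[OF _ tendsto_const[of c]] c by fastforce
qed

lemma limB: "0 < a \<Longrightarrow> 0 < (c::real) \<Longrightarrow> ((ereal \<circ> (\<lambda>w::real. w powr a / c) \<circ> real_of_ereal) \<longlongrightarrow> \<infinity>) (at_left \<infinity>)"
  unfolding ereal_tendsto_simps
proof -
  assume a: "0 < a" and c: "0 < c"
  have "filterlim (\<lambda>w::real. (1 / c) * w powr a) at_top at_top"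
    by (rule filterlim_tendsto_pos_mult_at_top[OF tendsto_const _ real_powr_at_top'[OF a]]) (use c in simp)
  then show "filterlim (\<lambda>w::real. w powr a / c) at_top at_top" by simp
qed

lemma main_y:
  fixes lam \<nu> X t \<theta> :: real
  assumes lam: "lam > 0" and nu: "0 < \<nu>" "\<nu> < 2" and t: "t > 0" and X: "X \<ge> 0"
  defines "c \<equiv> lam * t powr (\<nu>/2)"
  defines "F \<equiv> (\<lambda>w. exp (- w) * w powr (\<nu>/2 - 1) * exp (- (X * w powr (\<nu>/2) / c) * cos \<theta>) * sin (\<theta> - X * w powr (\<nu>/2) / c * sin \<theta>))"
  defines "H \<equiv> (\<lambda>y. exp (- X * y * cos \<theta> - (lam * y) powr (2/\<nu>) * t) * sin (\<theta> - X * y * sin \<theta>))"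
  assumes Fint: "set_integrable lborel {0<..} F"
  shows "set_integrable lborel {0<..} H"
    and "(LBINT y:{0<..}. H y) = (\<nu> / (2 * c)) * (LBINT w:{0<..}. F w)"
proof -
  define a where "a = \<nu> / 2"
  have a: "0 < a" "a < 1" using nu by (auto simp: a_def)
  have c: "c > 0" using lam t by (simp add: c_def)
  define g where "g w = w powr a / c" for w :: real
  define g' where "g' w = a * w powr (a - 1) / c" for w :: real
  have key: "g' w * H (g w) = (a / c) * F w" if w: "w > 0" for w
  proof -
    have p: "(lam * g w) powr (2 / \<nu>) * t = w"
    proof -
      have "lam * g w = (w / t) powr a" using lam t w by (simp add: g_def c_def a_def powr_divide)
      hence "(lam * g w) powr (2 / \<nu>) = w / t" using a w t by (simp add: powr_powr a_def)
      thus ?thesis using t by simp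
    qed
    have "H (g w) = exp (- w) * exp (- (X * w powr a / c) * cos \<theta>) * sin (\<theta> - X * w powr a / c * sin \<theta>)"
    proof -
      have "H (g w) = exp (- X * g w * cos \<theta> - w) * sin (\<theta> - X * g w * sin \<theta>)"
        unfolding H_def using p by simp
      then show ?thesis unfolding g_def by (simp add: exp_diff exp_minus field_simps)
    qed
    then show ?thesis unfolding F_def g'_def a_def[symmetric] by (simp add: algebra_simps)
  qed
  have deriv: "(g has_real_derivative g' w) (at w)" if "w > 0" for w
    unfolding g_def g'_def using that c by (auto intro!: derivative_eq_intros)
  have contg': "isCont g' w" if "w > 0" for w
    unfolding g'_def using that c by (intro continuous_intros) auto
  have gpos: "g w > 0" if "w > 0" for w using that c by (simp add: g_def)
  have contH: "isCont H y" if "y > 0" for y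
    unfolding H_def using that lam by (intro continuous_intros) auto
  have contabsH: "isCont (\<lambda>y. \<bar>H y\<bar>) y" if "y > 0" for y
    using contH[OF that] by (intro continuous_intros)
  have g'nn: "0 \<le> g' w" for w using a c by (simp add: g'_def)
  have A: "((ereal \<circ> g \<circ> real_of_ereal) \<longlongrightarrow> 0) (at_right 0)"
    unfolding g_def[abs_def] using limA[OF a(1) c] .
  have B: "((ereal \<circ> g \<circ> real_of_ereal) \<longlongrightarrow> \<infinity>) (at_left \<infinity>)"
    unfolding g_def[abs_def] using limB[OF a(1) c] .
  have ein: "einterval 0 \<infinity> = {0<..}" by (auto simp: einterval_def zero_ereal_def)
  have Fabs: "set_integrable lborel {0<..} (\<lambda>w. \<bar>H (g w)\<bar> * g' w)"
  proof -
    have "set_integrable lborel {0<..} (\<lambda>w. (a / c) * \<bar>F w\<bar>)"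
      using set_integrable_abs[OF Fint] by simp
    then show ?thesis
    proof (rule set_integrable_cong[THEN iffD1, rotated -1])
      fix w :: real assume "w \<in> {0<..}"
      hence w: "w > 0" by simp
      have "\<bar>H (g w)\<bar> * g' w = \<bar>g' w * H (g w)\<bar>" using g'nn[of w] by (simp add: abs_mult)
      also have "\<dots> = (a / c) * \<bar>F w\<bar>" using key[OF w] a c by (simp add: abs_mult)
      finally show "(a / c) * \<bar>F w\<bar> = \<bar>H (g w)\<bar> * g' w" by simp
    qed auto
  qed
  have absint: "set_integrable lborel (einterval 0 \<infinity>) (\<lambda>y. \<bar>H y\<bar>)"
    apply (rule interval_integral_substitution_nonneg(1)[where g=g and g'=g' and a=0 and b=\<infinity>])
    subgoal by simp
    subgoal for w using deriv[of w] by (simp add: zero_ereal_def)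
    subgoal for w using contabsH[OF gpos[of w]] by (simp add: zero_ereal_def)
    subgoal for w using contg'[of w] by (simp add: zero_ereal_def)
    subgoal by simp
    subgoal for w using g'nn[of w] by simp
    subgoal using A by simp
    subgoal using B by simp
    subgoal using Fabs ein by simp
    done
  have Hmeas: "set_borel_measurable lborel {0<..} H"
    unfolding set_borel_measurable_def H_def by measurable
  have Hint: "set_integrable lborel {0<..} H"
    using absint Hmeas unfolding ein by (simp add: set_integrable_abs_iff)
  then show "set_integrable lborel {0<..} H" .
  have gH: "set_integrable lborel {0<..} (\<lambda>w. g' w *\<^sub>R H (g w))"
  proof -
    have "set_integrable lborel {0<..} (\<lambda>w. (a / c) * F w)" using Fint by simp
    then show ?thesis
      by (rule set_integrable_cong[THEN iffD1, rotated -1]) (auto simp: key)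
  qed
  have "(LBINT y=0..\<infinity>. H y) = (LBINT w=0..\<infinity>. g' w *\<^sub>R H (g w))"
    apply (rule interval_integral_substitution_integrable[where g=g and g'=g' and a=0 and b=\<infinity>])
    subgoal by simp
    subgoal for w using deriv[of w] by (simp add: zero_ereal_def)
    subgoal for w using contH[OF gpos[of w]] by (simp add: zero_ereal_def)
    subgoal for w using contg'[of w] by (simp add: zero_ereal_def)
    subgoal for w using g'nn[of w] by simp
    subgoal using A by simp
    subgoal using B by simp
    subgoal using gH ein by simp
    subgoal using Hint ein by simp
    done
  also have "\<dots> = (LBINT w:{0<..}. (a / c) * F w)"
    unfolding zero_ereal_def interval_integral_to_infinity_eq
    by (rule set_lebesgue_integral_cong) (auto simp: key)
  also have "\<dots> = (a / c) * (LBINT w:{0<..}. F w)" by simp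
  finally show "(LBINT y:{0<..}. H y) = (\<nu> / (2 * c)) * (LBINT w:{0<..}. F w)"
    unfolding zero_ereal_def interval_integral_to_infinity_eq a_def by simp
qed

theorem theorem5p3:
  fixes lam \<nu> x t :: real
  assumes "lam > 0" and "0 < \<nu>" and "\<nu> < 2" and "t > 0"
  shows "set_integrable lborel {0<..} (\<lambda>w. exp (- w) * w powr (\<nu>/2 - 1)
            * exp (- (\<bar>x\<bar> * w powr (\<nu>/2) / (lam * t powr (\<nu>/2))) * cos (\<nu>*pi/2))
            * sin (\<nu>*pi/2 - \<bar>x\<bar> * w powr (\<nu>/2) / (lam * t powr (\<nu>/2)) * sin (\<nu>*pi/2)))
    \<and> u_nu lam \<nu> x t =
        1 / (2 * pi * lam * t powr (\<nu>/2)) *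
        (LBINT w:{0<..}. exp (- w) * w powr (\<nu>/2 - 1)
            * exp (- (\<bar>x\<bar> * w powr (\<nu>/2) / (lam * t powr (\<nu>/2))) * cos (\<nu>*pi/2))
            * sin (\<nu>*pi/2 - \<bar>x\<bar> * w powr (\<nu>/2) / (lam * t powr (\<nu>/2)) * sin (\<nu>*pi/2)))
    \<and> set_integrable lborel {0<..} (\<lambda>y. exp (- \<bar>x\<bar> * y * cos (\<nu>*pi/2) - (lam * y) powr (2/\<nu>) * t)
            * sin (\<nu>*pi/2 - \<bar>x\<bar> * y * sin (\<nu>*pi/2)))
    \<and> u_nu lam \<nu> x t =
        1 / (\<nu> * pi) *
        (LBINT y:{0<..}. exp (- \<bar>x\<bar> * y * cos (\<nu>*pi/2) - (lam * y) powr (2/\<nu>) * t)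
            * sin (\<nu>*pi/2 - \<bar>x\<bar> * y * sin (\<nu>*pi/2)))"
proof -
  note lam = assms(1) and nu = assms(2,3) and t = assms(4)
  define c where "c = lam * t powr (\<nu>/2)"
  define \<theta> where "\<theta> = \<nu>*pi/2"
  have c: "c > 0" using lam t by (simp add: c_def)
  define F where "F = (\<lambda>w. exp (- w) * w powr (\<nu>/2 - 1) * exp (- (\<bar>x\<bar> * w powr (\<nu>/2) / c) * cos \<theta>) * sin (\<theta> - \<bar>x\<bar> * w powr (\<nu>/2) / c * sin \<theta>))"
  define H where "H = (\<lambda>y. exp (- \<bar>x\<bar> * y * cos \<theta> - (lam * y) powr (2/\<nu>) * t) * sin (\<theta> - \<bar>x\<bar> * y * sin \<theta>))"
  have a: "0 < \<nu>/2" "\<nu>/2 < 1" using nu by auto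
  have z: "\<bar>x\<bar> / c \<ge> 0" using c by simp
  have th: "\<theta> = pi * (\<nu>/2)" by (simp add: \<theta>_def)
  have FF: "(\<lambda>w. exp (- w) * w powr (\<nu>/2 - 1) * exp (- (\<bar>x\<bar> / c * w powr (\<nu>/2)) * cos \<theta>) * sin (\<theta> - \<bar>x\<bar> / c * w powr (\<nu>/2) * sin \<theta>)) = F"
    by (simp add: F_def)
  note mw = main_w[OF a z th, unfolded FF]
  have Fint: "set_integrable lborel {0<..} F" by (rule mw(1))
  have my: "set_integrable lborel {0<..} H" "(LBINT y:{0<..}. H y) = (\<nu> / (2 * c)) * (LBINT w:{0<..}. F w)"
    using main_y[where X="\<bar>x\<bar>" and \<theta>=\<theta>, OF lam nu t abs_ge_zero, folded c_def, folded F_def H_def, OF Fint] by auto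
  have terms: "(- \<bar>x\<bar> / c) ^ k / fact k * rGamma (- \<nu> * real k / 2 + 1 - \<nu>/2) = (- (\<bar>x\<bar> / c)) ^ k / fact k * rGamma (1 - \<nu>/2 * (real k + 1))" for k
  proof -
    have "- \<nu> * real k / 2 + 1 - \<nu>/2 = 1 - \<nu>/2 * (real k + 1)" by (simp add: field_simps)
    then show ?thesis by (simp only: minus_divide_left)
  qed
  have su: "(\<Sum>k. (- \<bar>x\<bar> / c) ^ k / fact k * rGamma (- \<nu> * real k / 2 + 1 - \<nu>/2)) = (LBINT w:{0<..}. F w) / pi"
    unfolding terms using mw(2) by (simp add: sums_iff)
  have u: "u_nu lam \<nu> x t = 1 / (2 * pi * lam * t powr (\<nu>/2)) * (LBINT w:{0<..}. F w)"
    unfolding u_nu_def c_def[symmetric] su using c by (simp add: c_def field_simps)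
  have u2: "u_nu lam \<nu> x t = 1 / (\<nu> * pi) * (LBINT y:{0<..}. H y)"
    unfolding u my(2) using c nu by (simp add: c_def field_simps)
  show ?thesis
    using Fint u my(1) u2 unfolding F_def H_def c_def \<theta>_def by blast
qed

end
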